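(* Let $\Omega\subseteq\mathbb{R}^n$ be bounded and measurable, $Y$ a Hilbert space, $S:L^2(\Omega)\to Y$ linear and continuous, $z\in Y$, $u_a,u_b\in L^\infty(\Omega)$, $u_a\le u_b$, $U_{\mathrm{ad}}=\{u\in L^2(\Omega):u_a\le u\le u_b\text{ a.e.}\}$. Let $u^\dagger$ be a solution of $\min_{u\in U_{\mathrm{ad}}}\frac12\|Su-z\|_Y^2$ such that there exists $w\in Y$ with $u^\dagger=P_{U_{\mathrm{ad}}}(S^\ast w)$. Let $(\varepsilon_k)_k$ be positive reals with $\sum_{i=1}^\infty R_i<\infty$, where $R_i:=\frac{\varepsilon_i}{\alpha_i}+\frac{\varepsilon_i^2}{\alpha_i^2}+\frac{\gamma_{i-1}\varepsilon_i}{\alpha_i}+\frac{\varepsilon_i^2}{\alpha_i}$. Assume $S_h=S$ and let $(u_k^{\mathrm{in}})_k$ be generated by the inexact Bregman algorithm in the context. Then $u_k^{\mathrm{in}}\to u^\dagger$ in $L^2(\Omega)$.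
   Context: $\|\cdot\|,(\cdot,\cdot)$: $L^2(\Omega)$ norm and inner product; $P_{U_{\mathrm{ad}}}$: $L^2$-projection onto $U_{\mathrm{ad}}$. $(\alpha_k)_k$ is a bounded sequence of positive reals, $\gamma_k:=\sum_{j=1}^k\alpha_j^{-1}$, $\gamma_0=0$. Define $\mathcal B(\alpha,\lambda,u):=(1+\frac1\alpha)\|u-P_{U_{\mathrm{ad}}}(\frac1\alpha S_h^\ast(z-S_hu)+\lambda)\|$ (here with $S_h=S$). Inexact Bregman algorithm: $u_0^{\mathrm{in}}=P_{U_{\mathrm{ad}}}(0)$, $\lambda_0^{\mathrm{in}}=0$; for $k=1,2,\dots$ find $u_k^{\mathrm{in}}\in U_{\mathrm{ad}}$ with $\mathcal B(\alpha_k,\lambda_{k-1}^{\mathrm{in}},u_k^{\mathrm{in}})\le\varepsilon_k$, then set $\lambda_k^{\mathrm{in}}=\sum_{i=1}^k\frac1{\alpha_i}S_h^\ast(z-S_hu_i^{\mathrm{in}})$. *)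

theory Defs
  imports "HOL-Analysis.Analysis"
begin

text \<open>L^2(Omega), Omega a Lebesgue measurable subset of a Euclidean space, elements represented
  by functions (identified up to a.e. equality through the seminorm).\<close>

definition L2 :: "'a::euclidean_space set \<Rightarrow> ('a \<Rightarrow> real) set" where
  "L2 \<Omega> = {u. u \<in> borel_measurable (lebesgue_on \<Omega>) \<and> integrable (lebesgue_on \<Omega>) (\<lambda>x. (u x)\<^sup>2)}"

definition l2inner :: "'a::euclidean_space set \<Rightarrow> ('a \<Rightarrow> real) \<Rightarrow> ('a \<Rightarrow> real) \<Rightarrow> real" where
  "l2inner \<Omega> u v = (\<integral>x. u x * v x \<partial>lebesgue_on \<Omega>)"

definition l2norm :: "'a::euclidean_space set \<Rightarrow> ('a \<Rightarrow> real) \<Rightarrow> real" where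
  "l2norm \<Omega> u = sqrt (\<integral>x. (u x)\<^sup>2 \<partial>lebesgue_on \<Omega>)"

definition Linf :: "'a::euclidean_space set \<Rightarrow> ('a \<Rightarrow> real) set" where
  "Linf \<Omega> = {u. u \<in> borel_measurable (lebesgue_on \<Omega>) \<and>
                 (\<exists>C. AE x in lebesgue_on \<Omega>. \<bar>u x\<bar> \<le> C)}"

definition Uad :: "'a::euclidean_space set \<Rightarrow> ('a \<Rightarrow> real) \<Rightarrow> ('a \<Rightarrow> real) \<Rightarrow> ('a \<Rightarrow> real) set" where
  "Uad \<Omega> ua ub = {u \<in> L2 \<Omega>. AE x in lebesgue_on \<Omega>. ua x \<le> u x \<and> u x \<le> ub x}"

text \<open>L^2 projection onto U_ad (a metric projection; unique up to a.e. equality).\<close>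
definition PUad :: "'a::euclidean_space set \<Rightarrow> ('a \<Rightarrow> real) \<Rightarrow> ('a \<Rightarrow> real) \<Rightarrow> ('a \<Rightarrow> real) \<Rightarrow> ('a \<Rightarrow> real)" where
  "PUad \<Omega> ua ub v = (SOME u. u \<in> Uad \<Omega> ua ub \<and>
      (\<forall>w \<in> Uad \<Omega> ua ub. l2norm \<Omega> (\<lambda>x. u x - v x) \<le> l2norm \<Omega> (\<lambda>x. w x - v x)))"

definition gam :: "(nat \<Rightarrow> real) \<Rightarrow> nat \<Rightarrow> real" where
  "gam \<alpha> k = (\<Sum>j=1..k. 1 / \<alpha> j)"

definition Rterm :: "(nat \<Rightarrow> real) \<Rightarrow> (nat \<Rightarrow> real) \<Rightarrow> nat \<Rightarrow> real" where
  "Rterm \<alpha> \<epsilon> i = \<epsilon> i / \<alpha> i + (\<epsilon> i)\<^sup>2 / (\<alpha> i)\<^sup>2 + gam \<alpha> (i - 1) * \<epsilon> i / \<alpha> i + (\<epsilon> i)\<^sup>2 / \<alpha> i"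

definition Bres :: "'a::euclidean_space set \<Rightarrow> ('a \<Rightarrow> real) \<Rightarrow> ('a \<Rightarrow> real) \<Rightarrow>
    (('a \<Rightarrow> real) \<Rightarrow> 'b::real_inner) \<Rightarrow> ('b \<Rightarrow> 'a \<Rightarrow> real) \<Rightarrow> 'b \<Rightarrow>
    real \<Rightarrow> ('a \<Rightarrow> real) \<Rightarrow> ('a \<Rightarrow> real) \<Rightarrow> real" where
  "Bres \<Omega> ua ub S Sadj z \<alpha> lm u =
     (1 + 1 / \<alpha>) * l2norm \<Omega> (\<lambda>x. u x - PUad \<Omega> ua ub (\<lambda>y. (1 / \<alpha>) * Sadj (z - S u) y + lm y) x)"

end

theory Submission
  imports Defs
begin


lemma abs_prod_le_sq: "\<bar>(a::real) * b\<bar> \<le> a\<^sup>2 + b\<^sup>2"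
proof -
  have "0 \<le> (\<bar>a\<bar> - \<bar>b\<bar>)\<^sup>2" by simp
  moreover have "(\<bar>a\<bar> - \<bar>b\<bar>)\<^sup>2 = a\<^sup>2 + b\<^sup>2 - 2 * (\<bar>a\<bar> * \<bar>b\<bar>)"
    by (simp add: power2_diff)
  ultimately have "2 * (\<bar>a\<bar> * \<bar>b\<bar>) \<le> a\<^sup>2 + b\<^sup>2" by linarith
  moreover have "0 \<le> \<bar>a\<bar> * \<bar>b\<bar>" by simp
  ultimately have "\<bar>a\<bar> * \<bar>b\<bar> \<le> a\<^sup>2 + b\<^sup>2" by linarith
  then show ?thesis by (simp add: abs_mult)
qed

lemma L2_mult_integrable:
  assumes "f \<in> L2 \<Omega>" "g \<in> L2 \<Omega>"
  shows "integrable (lebesgue_on \<Omega>) (\<lambda>x. f x * g x)"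
proof -
  have 1: "integrable (lebesgue_on \<Omega>) (\<lambda>x. (f x)\<^sup>2 + (g x)\<^sup>2)"
    using assms by (auto simp: L2_def)
  have 2: "(\<lambda>x. f x * g x) \<in> borel_measurable (lebesgue_on \<Omega>)"
    using assms by (auto simp: L2_def)
  have 3: "AE x in lebesgue_on \<Omega>. norm (f x * g x) \<le> norm ((f x)\<^sup>2 + (g x)\<^sup>2)"
  proof (rule AE_I2)
    fix x
    have "\<bar>f x * g x\<bar> \<le> (f x)\<^sup>2 + (g x)\<^sup>2"
      by (rule abs_prod_le_sq)
    then show "norm (f x * g x) \<le> norm ((f x)\<^sup>2 + (g x)\<^sup>2)" by simp
  qed
  show ?thesis by (rule Bochner_Integration.integrable_bound[OF 1 2 3])
qed

lemma L2_add[intro]: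
  assumes "f \<in> L2 \<Omega>" "g \<in> L2 \<Omega>"
  shows "(\<lambda>x. f x + g x) \<in> L2 \<Omega>"
proof -
  have "integrable (lebesgue_on \<Omega>) (\<lambda>x. (f x)\<^sup>2 + 2 * (f x * g x) + (g x)\<^sup>2)"
    using assms L2_mult_integrable[OF assms] by (auto simp: L2_def)
  moreover have "(\<lambda>x. (f x + g x)\<^sup>2) = (\<lambda>x. (f x)\<^sup>2 + 2 * (f x * g x) + (g x)\<^sup>2)"
    by (rule ext) (simp add: power2_sum)
  ultimately show ?thesis using assms by (auto simp: L2_def)
qed

lemma L2_scale[intro]:
  assumes "f \<in> L2 \<Omega>"
  shows "(\<lambda>x. c * f x) \<in> L2 \<Omega>"
  using assms by (auto simp: L2_def power_mult_distrib)

lemma L2_diff[intro]: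
  assumes "f \<in> L2 \<Omega>" "g \<in> L2 \<Omega>"
  shows "(\<lambda>x. f x - g x) \<in> L2 \<Omega>"
  using L2_add[OF assms(1) L2_scale[OF assms(2), of "-1"]] by simp

lemma L2_zero[intro]: "(\<lambda>x. 0) \<in> L2 \<Omega>"
  by (auto simp: L2_def)

lemma L2_sum[intro]:
  assumes "\<And>i. i \<in> I \<Longrightarrow> f i \<in> L2 \<Omega>"
  shows "(\<lambda>x. \<Sum>i\<in>I. f i x) \<in> L2 \<Omega>"
  using assms
proof (induction I rule: infinite_finite_induct)
  case (insert i I)
  then have "(\<lambda>x. f i x + (\<Sum>i\<in>I. f i x)) \<in> L2 \<Omega>" by (intro L2_add) auto
  then show ?case using insert by simp
qed auto

lemma clip1:
  fixes a b v w :: real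
  assumes "a \<le> w" "w \<le> b"
  shows "(max a (min b v) - v)\<^sup>2 \<le> (w - v)\<^sup>2"
  unfolding abs_le_square_iff[symmetric]
  using assms by (cases "v \<le> a"; cases "v \<le> b") auto

lemma clip2:
  fixes a b v w p :: real
  assumes "a \<le> b" "a \<le> p" "p \<le> b" "(p - v)\<^sup>2 \<le> (max a (min b v) - v)\<^sup>2" "a \<le> w" "w \<le> b"
  shows "(v - p) * (w - p) \<le> 0"
proof -
  have "\<bar>p - v\<bar> \<le> \<bar>max a (min b v) - v\<bar>" using assms(4) by (simp add: abs_le_square_iff)
  then have "p = max a (min b v)" using assms(1-3) by (cases "v \<le> a"; cases "v \<le> b") auto
  then show ?thesis using assms by (cases "v \<le> a"; cases "v \<le> b") (auto simp: mult_le_0_iff)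
qed


lemma ip_comm: "l2inner \<Omega> f g = l2inner \<Omega> g f"
  unfolding l2inner_def by (simp add: mult.commute)

lemma ip_diff_l:
  assumes "f \<in> L2 \<Omega>" "g \<in> L2 \<Omega>" "h \<in> L2 \<Omega>"
  shows "l2inner \<Omega> (\<lambda>x. f x - g x) h = l2inner \<Omega> f h - l2inner \<Omega> g h"
proof -
  have "l2inner \<Omega> (\<lambda>x. f x - g x) h = (\<integral>x. f x * h x - g x * h x \<partial>lebesgue_on \<Omega>)"
    unfolding l2inner_def by (simp add: left_diff_distrib)
  also have "\<dots> = l2inner \<Omega> f h - l2inner \<Omega> g h"
    unfolding l2inner_def using assms
    by (intro Bochner_Integration.integral_diff L2_mult_integrable)
  finally show ?thesis .
qed

lemma ip_diff_r:
  assumes "f \<in> L2 \<Omega>" "g \<in> L2 \<Omega>" "h \<in> L2 \<Omega>"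
  shows "l2inner \<Omega> f (\<lambda>x. g x - h x) = l2inner \<Omega> f g - l2inner \<Omega> f h"
  using ip_diff_l[OF assms(2,3,1)] by (simp add: ip_comm[of \<Omega> f])

lemma ip_self_nonneg: "0 \<le> l2inner \<Omega> f f"
  unfolding l2inner_def by (intro integral_nonneg_AE) auto

lemma l2norm_sq: "(l2norm \<Omega> f)\<^sup>2 = l2inner \<Omega> f f"
proof -
  have "0 \<le> (\<integral>x. (f x)\<^sup>2 \<partial>lebesgue_on \<Omega>)" by (intro integral_nonneg_AE) auto
  then show ?thesis unfolding l2norm_def l2inner_def by (simp add: power2_eq_square)
qed

lemma l2norm_nonneg: "0 \<le> l2norm \<Omega> f"
  unfolding l2norm_def by (intro real_sqrt_ge_zero integral_nonneg_AE) auto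

locale bm =
  fixes \<Omega> :: "'a::euclidean_space set"
    and S :: "('a \<Rightarrow> real) \<Rightarrow> 'b::{real_inner, complete_space}"
    and Sadj :: "'b \<Rightarrow> 'a \<Rightarrow> real"
    and z :: 'b
    and ua ub udag :: "'a \<Rightarrow> real"
    and \<alpha> \<epsilon> :: "nat \<Rightarrow> real"
    and uin lam :: "nat \<Rightarrow> 'a \<Rightarrow> real"
  assumes \<Omega>_meas: "\<Omega> \<in> sets lebesgue" and \<Omega>_bdd: "bounded \<Omega>"
    and S_add: "\<And>u v. u \<in> L2 \<Omega> \<Longrightarrow> v \<in> L2 \<Omega> \<Longrightarrow> S (\<lambda>x. u x + v x) = S u + S v"
    and S_scale: "\<And>c u. u \<in> L2 \<Omega> \<Longrightarrow> S (\<lambda>x. c * u x) = c *\<^sub>R S u"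
    and S_bdd: "\<exists>K. \<forall>u \<in> L2 \<Omega>. norm (S u) \<le> K * l2norm \<Omega> u"
    and Sadj_L2: "\<And>w. Sadj w \<in> L2 \<Omega>"
    and Sadj_adj: "\<And>w u. u \<in> L2 \<Omega> \<Longrightarrow> l2inner \<Omega> (Sadj w) u = inner w (S u)"
    and ua: "ua \<in> Linf \<Omega>" and ub: "ub \<in> Linf \<Omega>"
    and uab: "AE x in lebesgue_on \<Omega>. ua x \<le> ub x"
    and udag_adm: "udag \<in> Uad \<Omega> ua ub"
    and udag_opt: "\<And>u. u \<in> Uad \<Omega> ua ub \<Longrightarrow>
        (1/2) * (norm (S udag - z))\<^sup>2 \<le> (1/2) * (norm (S u - z))\<^sup>2"
    and source: "\<exists>w. AE x in lebesgue_on \<Omega>. udag x = PUad \<Omega> ua ub (Sadj w) x"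
    and \<alpha>_pos: "\<And>k. k \<ge> 1 \<Longrightarrow> \<alpha> k > 0"
    and \<alpha>_bdd: "\<exists>C. \<forall>k \<ge> 1. \<alpha> k \<le> C"
    and \<epsilon>_pos: "\<And>k. k \<ge> 1 \<Longrightarrow> \<epsilon> k > 0"
    and R_sum: "summable (\<lambda>i. Rterm \<alpha> \<epsilon> (Suc i))"
    and init_u: "uin 0 = PUad \<Omega> ua ub (\<lambda>x. 0)"
    and init_lam: "lam 0 = (\<lambda>x. 0)"
    and step_adm: "\<And>k. k \<ge> 1 \<Longrightarrow> uin k \<in> Uad \<Omega> ua ub"
    and step_inexact: "\<And>k. k \<ge> 1 \<Longrightarrow> Bres \<Omega> ua ub S Sadj z (\<alpha> k) (lam (k - 1)) (uin k) \<le> \<epsilon> k"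
    and step_lam: "\<And>k. k \<ge> 1 \<Longrightarrow>
        lam k = (\<lambda>x. \<Sum>i=1..k. (1 / \<alpha> i) * Sadj (z - S (uin i)) x)"

begin

abbreviation "M \<equiv> lebesgue_on \<Omega>"
abbreviation "U \<equiv> Uad \<Omega> ua ub"
abbreviation "P \<equiv> PUad \<Omega> ua ub"

lemma finM: "finite_measure M"
  using finite_measure_lebesgue_on bounded_set_imp_lmeasurable \<Omega>_meas \<Omega>_bdd by blast

lemma Linf_L2: assumes "f \<in> Linf \<Omega>" shows "f \<in> L2 \<Omega>"
proof -
  from assms obtain C where f: "f \<in> borel_measurable M" and C: "AE x in M. \<bar>f x\<bar> \<le> C"
    by (auto simp: Linf_def)
  have "AE x in M. norm ((f x)\<^sup>2) \<le> C\<^sup>2"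
    using C by eventually_elim (simp add: abs_le_square_iff[symmetric] power2_abs)
  then have "integrable M (\<lambda>x. (f x)\<^sup>2)"
    using f by (intro finite_measure.integrable_const_bound[OF finM]) auto
  then show ?thesis using f by (simp add: L2_def)
qed

definition clip :: "('a \<Rightarrow> real) \<Rightarrow> 'a \<Rightarrow> real" where
  "clip v = (\<lambda>x. max (ua x) (min (ub x) (v x)))"

lemma clip_U: assumes "v \<in> L2 \<Omega>" shows "clip v \<in> U"
proof -
  from ua obtain Ca where a: "ua \<in> borel_measurable M" "AE x in M. \<bar>ua x\<bar> \<le> Ca"
    by (auto simp: Linf_def)
  from ub obtain Cb where b: "ub \<in> borel_measurable M" "AE x in M. \<bar>ub x\<bar> \<le> Cb"
    by (auto simp: Linf_def)
  have vm: "v \<in> borel_measurable M" using assms by (simp add: L2_def)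
  have m: "clip v \<in> borel_measurable M"
    unfolding clip_def using a b vm by measurable
  have "AE x in M. \<bar>clip v x\<bar> \<le> Ca + Cb"
    using a(2) b(2) by eventually_elim (auto simp: clip_def)
  then have "clip v \<in> Linf \<Omega>" using m by (auto simp: Linf_def)
  then have "clip v \<in> L2 \<Omega>" by (rule Linf_L2)
  moreover have "AE x in M. ua x \<le> clip v x \<and> clip v x \<le> ub x"
    using uab by eventually_elim (auto simp: clip_def)
  ultimately show ?thesis by (simp add: Uad_def)
qed

lemma U_L2: "u \<in> U \<Longrightarrow> u \<in> L2 \<Omega>" by (simp add: Uad_def)

lemma sq_int: "f \<in> L2 \<Omega> \<Longrightarrow> integrable M (\<lambda>x. (f x)\<^sup>2)" by (simp add: L2_def)

lemma clip_min: assumes "v \<in> L2 \<Omega>" "w \<in> U"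
  shows "l2norm \<Omega> (\<lambda>x. clip v x - v x) \<le> l2norm \<Omega> (\<lambda>x. w x - v x)"
proof -
  have "(\<integral>x. (clip v x - v x)\<^sup>2 \<partial>M) \<le> (\<integral>x. (w x - v x)\<^sup>2 \<partial>M)"
  proof (rule integral_mono_AE)
    show "integrable M (\<lambda>x. (clip v x - v x)\<^sup>2)"
      using clip_U[OF assms(1)] assms by (intro sq_int L2_diff) (auto simp: Uad_def)
    show "integrable M (\<lambda>x. (w x - v x)\<^sup>2)"
      using assms by (intro sq_int L2_diff) (auto simp: Uad_def)
    have "AE x in M. ua x \<le> w x \<and> w x \<le> ub x" using assms(2) by (simp add: Uad_def)
    then show "AE x in M. (clip v x - v x)\<^sup>2 \<le> (w x - v x)\<^sup>2"
      by eventually_elim (auto simp: clip_def intro: clip1)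
  qed
  then show ?thesis by (simp add: l2norm_def)
qed

lemma P_spec: assumes "v \<in> L2 \<Omega>"
  shows "P v \<in> U \<and> (\<forall>w \<in> U. l2norm \<Omega> (\<lambda>x. P v x - v x) \<le> l2norm \<Omega> (\<lambda>x. w x - v x))"
  unfolding PUad_def
  by (rule someI[where x="clip v"]) (use clip_U[OF assms] clip_min[OF assms] in auto)

lemma P_U: "v \<in> L2 \<Omega> \<Longrightarrow> P v \<in> U" using P_spec by blast

lemma P_VI_AE: assumes "v \<in> L2 \<Omega>" "w \<in> U"
  shows "AE x in M. (v x - P v x) * (w x - P v x) \<le> 0"
proof -
  have pU: "P v \<in> U" using P_U[OF assms(1)] .
  have "l2norm \<Omega> (\<lambda>x. P v x - v x) \<le> l2norm \<Omega> (\<lambda>x. clip v x - v x)"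
    using P_spec[OF assms(1)] clip_U[OF assms(1)] by blast
  then have le: "(\<integral>x. (P v x - v x)\<^sup>2 \<partial>M) \<le> (\<integral>x. (clip v x - v x)\<^sup>2 \<partial>M)"
    by (simp add: l2norm_def)
  have i1: "integrable M (\<lambda>x. (P v x - v x)\<^sup>2)"
    using pU assms by (intro sq_int L2_diff) (auto simp: Uad_def)
  have i2: "integrable M (\<lambda>x. (clip v x - v x)\<^sup>2)"
    using clip_U[OF assms(1)] assms by (intro sq_int L2_diff) (auto simp: Uad_def)
  have pb: "AE x in M. ua x \<le> P v x \<and> P v x \<le> ub x" using pU by (simp add: Uad_def)
  have wb: "AE x in M. ua x \<le> w x \<and> w x \<le> ub x" using assms(2) by (simp add: Uad_def)
  have ae: "AE x in M. 0 \<le> (P v x - v x)\<^sup>2 - (clip v x - v x)\<^sup>2"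
    using pb by eventually_elim (auto simp: clip_def dest: clip1)
  have "(\<integral>x. (P v x - v x)\<^sup>2 - (clip v x - v x)\<^sup>2 \<partial>M) = 0"
  proof -
    have "(\<integral>x. (P v x - v x)\<^sup>2 - (clip v x - v x)\<^sup>2 \<partial>M) =
      (\<integral>x. (P v x - v x)\<^sup>2 \<partial>M) - (\<integral>x. (clip v x - v x)\<^sup>2 \<partial>M)"
      using i1 i2 by (rule Bochner_Integration.integral_diff)
    moreover have "0 \<le> (\<integral>x. (P v x - v x)\<^sup>2 - (clip v x - v x)\<^sup>2 \<partial>M)"
      using ae by (rule integral_nonneg_AE)
    ultimately show ?thesis using le by linarith
  qed
  then have "AE x in M. (P v x - v x)\<^sup>2 - (clip v x - v x)\<^sup>2 = 0"
    using integral_nonneg_eq_0_iff_AE[OF Bochner_Integration.integrable_diff[OF i1 i2] ae] by blast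
  then show ?thesis
    using pb wb
  proof eventually_elim
    case (elim x)
    show ?case
      by (rule clip2[where a="ua x" and b="ub x" and w="w x"]) (use elim in \<open>auto simp: clip_def\<close>)
  qed
qed

lemma P_VI: assumes "v \<in> L2 \<Omega>" "w \<in> U"
  shows "(\<integral>x. (v x - P v x) * (w x - P v x) \<partial>M) \<le> 0"
proof -
  have "0 \<le> (\<integral>x. - ((v x - P v x) * (w x - P v x)) \<partial>M)"
    using P_VI_AE[OF assms] by (intro integral_nonneg_AE) (auto elim!: AE_mp)
  then show ?thesis by simp
qed

end




lemma conv_pt:
  fixes a b p q t :: real
  assumes "a \<le> p" "p \<le> b" "a \<le> q" "q \<le> b" "0 \<le> t" "t \<le> 1"
  shows "a \<le> p + t * (q - p) \<and> p + t * (q - p) \<le> b"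
proof -
  have 1: "t * (a - p) \<le> t * (q - p)" using assms by (intro mult_left_mono) auto
  have 2: "(1 - t) * a \<le> (1 - t) * p" using assms by (intro mult_left_mono) auto
  have 3: "t * (q - p) \<le> t * (b - p)" using assms by (intro mult_left_mono) auto
  have 4: "(1 - t) * p \<le> (1 - t) * b" using assms by (intro mult_left_mono) auto
  have "p + t * (a - p) = (1 - t) * p + t * a" "p + t * (b - p) = (1 - t) * p + t * b"
    by (simp_all add: algebra_simps)
  then show ?thesis using 1 2 3 4 by (simp add: algebra_simps) 
qed

context bm
begin

definition Kp where "Kp = \<bar>SOME K. \<forall>u \<in> L2 \<Omega>. norm (S u) \<le> K * l2norm \<Omega> u\<bar>"

lemma Kp_nonneg: "0 \<le> Kp" by (simp add: Kp_def)

lemma S_bound: assumes "u \<in> L2 \<Omega>" shows "norm (S u) \<le> Kp * l2norm \<Omega> u"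
proof -
  have "\<forall>u \<in> L2 \<Omega>. norm (S u) \<le> (SOME K. \<forall>u \<in> L2 \<Omega>. norm (S u) \<le> K * l2norm \<Omega> u) * l2norm \<Omega> u"
    using S_bdd by (rule someI_ex)
  then have "norm (S u) \<le> (SOME K. \<forall>u \<in> L2 \<Omega>. norm (S u) \<le> K * l2norm \<Omega> u) * l2norm \<Omega> u"
    using assms by blast
  also have "\<dots> \<le> Kp * l2norm \<Omega> u"
    unfolding Kp_def by (intro mult_right_mono l2norm_nonneg) simp
  finally show ?thesis .
qed

lemma S_diff: assumes "f \<in> L2 \<Omega>" "g \<in> L2 \<Omega>"
  shows "S (\<lambda>x. f x - g x) = S f - S g"
proof -
  have eq1: "(\<lambda>x. f x - g x) = (\<lambda>x. f x + (-1) * g x)" by auto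
  have "S (\<lambda>x. f x - g x) = S (\<lambda>x. f x + (-1) * g x)" by (subst eq1) (rule refl)
  also have "\<dots> = S f + S (\<lambda>x. (-1) * g x)" by (rule S_add[OF assms(1) L2_scale[OF assms(2)]])
  also have "\<dots> = S f + (-1) *\<^sub>R S g" by (simp only: S_scale[OF assms(2)])
  also have "\<dots> = S f - S g" by simp
  finally show ?thesis .
qed

lemma S_comb: assumes "f \<in> L2 \<Omega>" "g \<in> L2 \<Omega>"
  shows "S (\<lambda>x. f x + t * (g x - f x)) = S f + t *\<^sub>R (S g - S f)"
proof -
  have d: "(\<lambda>x. g x - f x) \<in> L2 \<Omega>" using assms by blast
  have "S (\<lambda>x. f x + t * (g x - f x)) = S f + S (\<lambda>x. t * (g x - f x))"
    using S_add[OF assms(1) L2_scale[OF d]] by simp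
  also have "\<dots> = S f + t *\<^sub>R (S g - S f)" using S_scale[OF d, of t] S_diff[OF assms(2,1)] by simp
  finally show ?thesis .
qed

lemma U_conv: assumes "u1 \<in> U" "u2 \<in> U" "0 \<le> t" "t \<le> 1"
  shows "(\<lambda>x. u1 x + t * (u2 x - u1 x)) \<in> U"
proof -
  have l: "(\<lambda>x. u1 x + t * (u2 x - u1 x)) \<in> L2 \<Omega>"
    using assms by (intro L2_add L2_scale L2_diff) (auto simp: Uad_def)
  have a1: "AE x in M. ua x \<le> u1 x \<and> u1 x \<le> ub x" and a2: "AE x in M. ua x \<le> u2 x \<and> u2 x \<le> ub x"
    using assms by (auto simp: Uad_def)
  have "AE x in M. ua x \<le> u1 x + t * (u2 x - u1 x) \<and> u1 x + t * (u2 x - u1 x) \<le> ub x"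
    using a1 a2 by eventually_elim (use assms conv_pt in auto)
  then show ?thesis using l by (simp add: Uad_def)
qed

abbreviation "yd \<equiv> S udag"

lemma udag_L2: "udag \<in> L2 \<Omega>" using udag_adm by (simp add: Uad_def)

lemma OPT: assumes u: "u \<in> U" shows "inner (z - yd) (S u - yd) \<le> 0"
proof (rule ccontr)
  define a where "a = yd - z"
  define d where "d = S u - yd"
  define c where "c = inner a d"
  define D where "D = inner d d"
  assume "\<not> inner (z - yd) (S u - yd) \<le> 0"
  then have cneg: "c < 0" unfolding c_def a_def d_def by (simp add: inner_diff_left inner_diff_right)
  have D0: "0 \<le> D" unfolding D_def by simp
  define t where "t = min 1 (- c / (D + 1))"
  have "0 < - c / (D + 1)" using cneg D0 by (intro divide_pos_pos) auto
  then have t0: "0 < t" by (simp add: t_def)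
  have t1: "t \<le> 1" by (simp add: t_def)
  have ut: "(\<lambda>x. udag x + t * (u x - udag x)) \<in> U"
    using U_conv[OF udag_adm u] t0 t1 by simp
  have "S (\<lambda>x. udag x + t * (u x - udag x)) = yd + t *\<^sub>R d"
    unfolding d_def using S_comb[OF udag_L2 U_L2[OF u]] by simp
  then have "(norm (yd - z))\<^sup>2 \<le> (norm (yd + t *\<^sub>R d - z))\<^sup>2"
    using udag_opt[OF ut] by simp
  then have "inner a a \<le> inner (a + t *\<^sub>R d) (a + t *\<^sub>R d)"
    unfolding a_def by (simp add: power2_norm_eq_inner algebra_simps)
  also have "\<dots> = inner a a + 2 * t * c + t * t * D"
    unfolding c_def D_def by (simp add: inner_add_left inner_add_right inner_commute algebra_simps)
  finally have "0 \<le> t * (2 * c + t * D)" by (simp add: algebra_simps)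
  then have h: "0 \<le> 2 * c + t * D" using t0 by (simp add: zero_le_mult_iff)
  have "t * D \<le> (- c / (D + 1)) * D" using D0 by (intro mult_right_mono) (auto simp: t_def)
  also have "\<dots> = (- c) * (D / (D + 1))" by simp
  also have "\<dots> \<le> (- c) * 1" using cneg D0 by (intro mult_left_mono) auto
  finally show False using h cneg by linarith
qed

lemma lam_all: "lam k = (\<lambda>x. \<Sum>i=1..k. (1 / \<alpha> i) * Sadj (z - S (uin i)) x)"
proof (cases "k = 0")
  case True then show ?thesis using init_lam by simp
next
  case False then show ?thesis using step_lam by simp
qed

lemma lam_L2: "lam k \<in> L2 \<Omega>"
  unfolding lam_all by (intro L2_sum L2_scale Sadj_L2)

lemma lam_step: assumes "1 \<le> k"
  shows "(\<lambda>y. (1 / \<alpha> k) * Sadj (z - S (uin k)) y + lam (k - 1) y) = lam k"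
proof -
  obtain j where k: "k = Suc j" using assms by (cases k) auto
  show ?thesis unfolding k lam_all by (rule ext) simp
qed

definition v where "v k = P (lam k)"

lemma v_U: "v k \<in> U" unfolding v_def by (rule P_U[OF lam_L2])
lemma v_L2: "v k \<in> L2 \<Omega>" using v_U U_L2 by blast
lemma uin_L2: "1 \<le> k \<Longrightarrow> uin k \<in> L2 \<Omega>" using step_adm U_L2 by blast

lemma eb: assumes "1 \<le> k"
  shows "l2norm \<Omega> (\<lambda>x. uin k x - v k x) \<le> \<epsilon> k \<and> l2norm \<Omega> (\<lambda>x. uin k x - v k x) \<le> \<alpha> k * \<epsilon> k"
proof -
  define n where "n = l2norm \<Omega> (\<lambda>x. uin k x - v k x)"
  have n0: "0 \<le> n" unfolding n_def by (rule l2norm_nonneg)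
  have a0: "0 < \<alpha> k" using \<alpha>_pos assms by blast
  have "(1 + 1 / \<alpha> k) * n \<le> \<epsilon> k"
    using step_inexact[OF assms] unfolding Bres_def lam_step[OF assms] n_def v_def by simp
  then have h: "n + n / \<alpha> k \<le> \<epsilon> k" by (simp add: algebra_simps)
  have "0 \<le> n / \<alpha> k" using n0 a0 by simp
  then have 1: "n \<le> \<epsilon> k" using h by linarith
  have "n / \<alpha> k \<le> \<epsilon> k" using h n0 by linarith
  then have "n \<le> \<alpha> k * \<epsilon> k" using a0 by (simp add: divide_le_eq mult.commute)
  then show ?thesis using 1 n_def by simp
qed

definition Mc where "Mc = l2norm \<Omega> (\<lambda>x. ub x - ua x)"

lemma Mc_bound: assumes "u \<in> U" shows "l2norm \<Omega> (\<lambda>x. udag x - u x) \<le> Mc"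
proof -
  have uaL: "ua \<in> L2 \<Omega>" and ubL: "ub \<in> L2 \<Omega>" using ua ub Linf_L2 by auto
  have "(\<integral>x. (udag x - u x)\<^sup>2 \<partial>M) \<le> (\<integral>x. (ub x - ua x)\<^sup>2 \<partial>M)"
  proof (rule integral_mono_AE)
    show "integrable M (\<lambda>x. (udag x - u x)\<^sup>2)"
      using assms udag_L2 by (intro sq_int L2_diff) (auto simp: Uad_def)
    show "integrable M (\<lambda>x. (ub x - ua x)\<^sup>2)"
      using uaL ubL by (intro sq_int L2_diff)
    have a1: "AE x in M. ua x \<le> u x \<and> u x \<le> ub x" and a2: "AE x in M. ua x \<le> udag x \<and> udag x \<le> ub x"
      using assms udag_adm by (auto simp: Uad_def)
    show "AE x in M. (udag x - u x)\<^sup>2 \<le> (ub x - ua x)\<^sup>2"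
      using a1 a2 by eventually_elim (auto simp: abs_le_square_iff[symmetric])
  qed
  then show ?thesis unfolding Mc_def l2norm_def by simp
qed

lemma Mc_nonneg: "0 \<le> Mc" unfolding Mc_def by (rule l2norm_nonneg)

lemma lam_inner: assumes f: "f \<in> L2 \<Omega>"
  shows "l2inner \<Omega> (lam k) f = (\<Sum>i=1..k. (1 / \<alpha> i) * inner (z - S (uin i)) (S f))"
proof -
  have "l2inner \<Omega> (lam k) f = (\<integral>x. (\<Sum>i\<in>{1..k}. (1 / \<alpha> i) * (Sadj (z - S (uin i)) x * f x)) \<partial>M)"
    unfolding l2inner_def lam_all by (simp add: sum_distrib_right mult.assoc)
  also have "\<dots> = (\<Sum>i\<in>{1..k}. (\<integral>x. (1 / \<alpha> i) * (Sadj (z - S (uin i)) x * f x) \<partial>M))"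
    using f by (intro Bochner_Integration.integral_sum Bochner_Integration.integrable_mult_right L2_mult_integrable Sadj_L2)
  also have "\<dots> = (\<Sum>i=1..k. (1 / \<alpha> i) * inner (z - S (uin i)) (S f))"
    using Sadj_adj[OF f] by (simp add: l2inner_def)
  finally show ?thesis .
qed

end



context bm
begin

definition E where
  "E k = 1/2 * l2inner \<Omega> (\<lambda>x. udag x - v k x) (\<lambda>x. udag x - v k x)
        + l2inner \<Omega> (\<lambda>x. v k x - lam k x) (\<lambda>x. udag x - v k x)"

lemma VI_l: assumes "w \<in> U"
  shows "l2inner \<Omega> (\<lambda>x. lam k x - v k x) (\<lambda>x. w x - v k x) \<le> 0"
  using P_VI[OF lam_L2 assms, of k] unfolding l2inner_def v_def .

lemmas ipx = ip_diff_l ip_diff_r udag_L2 v_L2 lam_L2 L2_diff ip_comm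

lemma E_lower: "1/2 * l2inner \<Omega> (\<lambda>x. udag x - v k x) (\<lambda>x. udag x - v k x) \<le> E k"
  using VI_l[OF udag_adm, of k] unfolding E_def by (simp add: ipx; linarith)

lemma E_nonneg: "0 \<le> E k"
  using E_lower[of k] ip_self_nonneg[of \<Omega> "\<lambda>x. udag x - v k x"] by linarith

definition C1 where "C1 = (norm (z - yd) + Kp * Mc) * Kp"

lemma rec1: "E (Suc j) \<le> E j + C1 * (\<epsilon> (Suc j) / \<alpha> (Suc j))"
proof -
  let ?k = "Suc j"
  define f1 where "f1 = (\<lambda>x. udag x - v ?k x)"
  have f1L: "f1 \<in> L2 \<Omega>" unfolding f1_def using udag_L2 v_L2 by blast
  have uk: "uin ?k \<in> U" using step_adm by simp
  have ukL: "uin ?k \<in> L2 \<Omega>" using uk U_L2 by blast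
  define y where "y = S (uin ?k)"
  define sv where "sv = S (v ?k)"
  have Sf1: "S f1 = yd - sv" unfolding f1_def sv_def by (rule S_diff[OF udag_L2 v_L2])
  have a0: "0 < \<alpha> ?k" using \<alpha>_pos by simp
  have ID: "l2inner \<Omega> (lam ?k) f1 - l2inner \<Omega> (lam j) f1 = (1 / \<alpha> ?k) * inner (z - y) (yd - sv)"
    using lam_inner[OF f1L, of ?k] lam_inner[OF f1L, of j] Sf1 by (simp add: y_def)
  have VI1: "l2inner \<Omega> (\<lambda>x. lam j x - v j x) (\<lambda>x. v ?k x - v j x) \<le> 0"
    using VI_l[OF v_U] .
  have sq: "0 \<le> l2inner \<Omega> (\<lambda>x. v ?k x - v j x) (\<lambda>x. v ?k x - v j x)"
    by (rule ip_self_nonneg)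
  have n: "l2norm \<Omega> (\<lambda>x. uin ?k x - v ?k x) \<le> \<epsilon> ?k" using eb[of ?k] by simp
  have ysv: "norm (y - sv) \<le> Kp * \<epsilon> ?k"
  proof -
    have "norm (y - sv) = norm (S (\<lambda>x. uin ?k x - v ?k x))"
      unfolding y_def sv_def using S_diff[OF ukL v_L2] by simp
    also have "\<dots> \<le> Kp * l2norm \<Omega> (\<lambda>x. uin ?k x - v ?k x)"
      using ukL v_L2 by (intro S_bound L2_diff)
    also have "\<dots> \<le> Kp * \<epsilon> ?k" using n Kp_nonneg by (intro mult_left_mono)
    finally show ?thesis .
  qed
  have ydy: "norm (yd - y) \<le> Kp * Mc"
  proof -
    have "norm (yd - y) = norm (S (\<lambda>x. udag x - uin ?k x))"
      unfolding y_def using S_diff[OF udag_L2 ukL] by simp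
    also have "\<dots> \<le> Kp * l2norm \<Omega> (\<lambda>x. udag x - uin ?k x)"
      using ukL udag_L2 by (intro S_bound L2_diff)
    also have "\<dots> \<le> Kp * Mc" using Mc_bound[OF uk] Kp_nonneg by (intro mult_left_mono)
    finally show ?thesis .
  qed
  have zy: "norm (z - y) \<le> norm (z - yd) + Kp * Mc"
    using norm_triangle_ineq[of "z - yd" "yd - y"] ydy by simp
  have opt: "0 \<le> inner (z - yd) (yd - y)"
    using OPT[OF uk] unfolding y_def by (simp add: inner_diff_right)
  have "inner (z - y) (yd - y) = inner (z - yd) (yd - y) + inner (yd - y) (yd - y)"
    by (simp add: inner_diff_left inner_diff_right)
  then have p1: "0 \<le> inner (z - y) (yd - y)" using opt by simp
  have "\<bar>inner (z - y) (y - sv)\<bar> \<le> norm (z - y) * norm (y - sv)"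
    by (rule Cauchy_Schwarz_ineq2)
  also have "\<dots> \<le> (norm (z - yd) + Kp * Mc) * (Kp * \<epsilon> ?k)"
    using zy ysv Kp_nonneg Mc_nonneg by (intro mult_mono) auto
  finally have p2: "- C1 * \<epsilon> ?k \<le> inner (z - y) (y - sv)" unfolding C1_def by (simp add: algebra_simps)
  have "inner (z - y) (yd - sv) = inner (z - y) (yd - y) + inner (z - y) (y - sv)"
    by (simp add: inner_diff_right)
  then have "- C1 * \<epsilon> ?k \<le> inner (z - y) (yd - sv)" using p1 p2 by linarith
  then have "- C1 * (\<epsilon> ?k / \<alpha> ?k) \<le> (1 / \<alpha> ?k) * inner (z - y) (yd - sv)"
    using a0 by (simp add: divide_le_eq field_simps)
  moreover define c where "c = C1 * (\<epsilon> ?k / \<alpha> ?k)"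
  ultimately have X: "- c \<le> l2inner \<Omega> (lam ?k) f1 - l2inner \<Omega> (lam j) f1"
    using ID by simp
  have "E (Suc j) \<le> E j + c"
    using X VI1 sq unfolding E_def f1_def apply (simp add: ipx)
    apply (simp add: field_simps)
    done
  then show ?thesis by (simp add: c_def)
qed

definition w0 where "w0 = (SOME w. AE x in M. udag x = P (Sadj w) x)"

lemma src: "AE x in M. udag x = P (Sadj w0) x"
  unfolding w0_def using source by (rule someI_ex)

lemma src_VI: assumes w: "w \<in> U"
  shows "l2inner \<Omega> (\<lambda>x. Sadj w0 x - udag x) (\<lambda>x. w x - udag x) \<le> 0"
proof -
  have pL: "P (Sadj w0) \<in> L2 \<Omega>" using P_U[OF Sadj_L2] U_L2 by blast
  have wL: "w \<in> L2 \<Omega>" using w U_L2 by blast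
  have "(\<integral>x. (Sadj w0 x - P (Sadj w0) x) * (w x - P (Sadj w0) x) \<partial>M) =
        (\<integral>x. (Sadj w0 x - udag x) * (w x - udag x) \<partial>M)"
  proof (rule integral_cong_AE)
    show "(\<lambda>x. (Sadj w0 x - P (Sadj w0) x) * (w x - P (Sadj w0) x)) \<in> borel_measurable M"
      using pL wL Sadj_L2 by (intro borel_measurable_integrable L2_mult_integrable L2_diff)
    show "(\<lambda>x. (Sadj w0 x - udag x) * (w x - udag x)) \<in> borel_measurable M"
      using udag_L2 wL Sadj_L2 by (intro borel_measurable_integrable L2_mult_integrable L2_diff)
    show "AE x in M. (Sadj w0 x - P (Sadj w0) x) * (w x - P (Sadj w0) x) =
        (Sadj w0 x - udag x) * (w x - udag x)"
      using src by eventually_elim simp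
  qed
  then show ?thesis using P_VI[OF Sadj_L2 w, of w0] unfolding l2inner_def by simp
qed

definition s where "s k = (\<Sum>i=1..k. (1 / \<alpha> i) *\<^sub>R (yd - S (uin i))) - w0"

lemma gam_nonneg: "0 \<le> gam \<alpha> k"
  unfolding gam_def using \<alpha>_pos by (intro sum_nonneg) (simp add: less_imp_le)

lemma sa: "inner (s k) (yd - S (v k)) \<le> - E k"
proof -
  define f1 where "f1 = (\<lambda>x. udag x - v k x)"
  define X where "X = yd - S (v k)"
  have f1L: "f1 \<in> L2 \<Omega>" unfolding f1_def using udag_L2 v_L2 by blast
  have Sf1: "S f1 = X" unfolding f1_def X_def by (rule S_diff[OF udag_L2 v_L2])
  have li: "l2inner \<Omega> (lam k) f1 = (\<Sum>i=1..k. (1 / \<alpha> i) * inner (z - S (uin i)) X)"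
    using lam_inner[OF f1L, of k] Sf1 by simp
  have "\<And>i. (1 / \<alpha> i) * inner (z - S (uin i)) X
      = (1 / \<alpha> i) * inner (z - yd) X + (1 / \<alpha> i) * inner (yd - S (uin i)) X"
    by (simp add: inner_diff_left algebra_simps)
  then have "(\<Sum>i=1..k. (1 / \<alpha> i) * inner (z - S (uin i)) X)
      = (\<Sum>i=1..k. (1 / \<alpha> i) * inner (z - yd) X) + (\<Sum>i=1..k. (1 / \<alpha> i) * inner (yd - S (uin i)) X)"
    by (simp add: sum.distrib)
  also have "(\<Sum>i=1..k. (1 / \<alpha> i) * inner (z - yd) X) = gam \<alpha> k * inner (z - yd) X"
    unfolding gam_def by (simp add: sum_distrib_right)
  finally have split: "l2inner \<Omega> (lam k) f1
     = gam \<alpha> k * inner (z - yd) X + (\<Sum>i=1..k. (1 / \<alpha> i) * inner (yd - S (uin i)) X)"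
    using li by simp
  have sk: "inner (s k) X = (\<Sum>i=1..k. (1 / \<alpha> i) * inner (yd - S (uin i)) X) - inner w0 X"
    unfolding s_def by (simp add: inner_diff_left inner_sum_left)
  have w0X: "inner w0 X = l2inner \<Omega> (Sadj w0) f1" using Sadj_adj[OF f1L] Sf1 by simp
  have optX: "0 \<le> inner (z - yd) X" using OPT[OF v_U, of k] unfolding X_def
    by (simp add: inner_diff_right)
  have gX: "0 \<le> gam \<alpha> k * inner (z - yd) X" using optX gam_nonneg by simp
  have key: "l2inner \<Omega> (lam k) f1 - l2inner \<Omega> (Sadj w0) f1 \<le> - E k"
    using src_VI[OF v_U, of k] ip_self_nonneg[of \<Omega> f1] unfolding E_def f1_def
    apply (simp add: ipx Sadj_L2)
    apply (simp add: field_simps)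
    done
  show ?thesis using key gX split sk w0X unfolding X_def[symmetric] by linarith
qed

lemma s_norm: "norm (s k) \<le> norm w0 + gam \<alpha> k * (Kp * Mc)"
proof -
  have "norm (s k) \<le> norm (\<Sum>i=1..k. (1 / \<alpha> i) *\<^sub>R (yd - S (uin i))) + norm w0"
    unfolding s_def by (rule norm_triangle_ineq4)
  also have "norm (\<Sum>i=1..k. (1 / \<alpha> i) *\<^sub>R (yd - S (uin i))) \<le> (\<Sum>i=1..k. norm ((1 / \<alpha> i) *\<^sub>R (yd - S (uin i))))"
    by (rule norm_sum)
  also have "\<dots> \<le> (\<Sum>i=1..k. (1 / \<alpha> i) * (Kp * Mc))"
  proof (rule sum_mono)
    fix i assume i: "i \<in> {1..k}"
    then have a0: "0 < \<alpha> i" using \<alpha>_pos by simp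
    have uk: "uin i \<in> U" using step_adm i by simp
    have ukL: "uin i \<in> L2 \<Omega>" using uk U_L2 by blast
    have "norm (yd - S (uin i)) = norm (S (\<lambda>x. udag x - uin i x))"
      using S_diff[OF udag_L2 ukL] by simp
    also have "\<dots> \<le> Kp * l2norm \<Omega> (\<lambda>x. udag x - uin i x)"
      using ukL udag_L2 by (intro S_bound L2_diff)
    also have "\<dots> \<le> Kp * Mc" using Mc_bound[OF uk] Kp_nonneg by (intro mult_left_mono)
    finally have "norm (yd - S (uin i)) \<le> Kp * Mc" .
    then show "norm ((1 / \<alpha> i) *\<^sub>R (yd - S (uin i))) \<le> (1 / \<alpha> i) * (Kp * Mc)"
      using a0 by (simp add: divide_right_mono)
  qed
  also have "\<dots> = gam \<alpha> k * (Kp * Mc)" unfolding gam_def by (simp add: sum_distrib_right)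
  finally show ?thesis by simp
qed

definition C2 where "C2 = 2 * Kp * norm w0 + 2 * Kp * Kp * Mc"
definition C3 where "C3 = 2 * Kp * Kp * Mc"

lemma rec2: "(norm (s (Suc j)))\<^sup>2 \<le> (norm (s j))\<^sup>2 - 2 * (E (Suc j) / \<alpha> (Suc j))
   + C2 * (\<epsilon> (Suc j) / \<alpha> (Suc j)) + C3 * (gam \<alpha> j * \<epsilon> (Suc j) / \<alpha> (Suc j))"
proof -
  let ?k = "Suc j"
  define cc where "cc = 1 / \<alpha> ?k"
  define y where "y = S (uin ?k)"
  define d where "d = yd - y"
  define n where "n = l2norm \<Omega> (\<lambda>x. uin ?k x - v ?k x)"
  have a0: "0 < \<alpha> ?k" using \<alpha>_pos by simp
  have cc0: "0 < cc" using a0 by (simp add: cc_def)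
  have n0: "0 \<le> n" unfolding n_def by (rule l2norm_nonneg)
  have neps: "n \<le> \<epsilon> ?k" and naeps: "n \<le> \<alpha> ?k * \<epsilon> ?k" using eb[of ?k] by (simp_all add: n_def)
  have uk: "uin ?k \<in> U" using step_adm by simp
  have ukL: "uin ?k \<in> L2 \<Omega>" using uk U_L2 by blast
  have sS: "s j = s ?k - cc *\<^sub>R d"
    unfolding s_def cc_def d_def y_def by (simp add: algebra_simps)
  have b: "inner (s ?k) (S (v ?k) - y) \<le> norm (s ?k) * (Kp * n)"
  proof -
    have "inner (s ?k) (S (v ?k) - y) \<le> norm (s ?k) * norm (S (v ?k) - y)"
      by (rule norm_cauchy_schwarz)
    also have "norm (S (v ?k) - y) = norm (S (\<lambda>x. uin ?k x - v ?k x))"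
      unfolding y_def using S_diff[OF ukL v_L2] by (simp add: norm_minus_commute)
    also have "\<dots> \<le> Kp * n" unfolding n_def using ukL v_L2 by (intro S_bound L2_diff)
    finally show ?thesis by (simp add: mult_left_mono)
  qed
  have c: "inner (s ?k) d \<le> - E ?k + norm (s ?k) * (Kp * n)"
  proof -
    have "inner (s ?k) d = inner (s ?k) (yd - S (v ?k)) + inner (s ?k) (S (v ?k) - y)"
      unfolding d_def by (simp add: inner_diff_right)
    then show ?thesis using sa[of ?k] b by linarith
  qed
  have nsq: "(norm (s j))\<^sup>2 = (norm (s ?k))\<^sup>2 - 2 * cc * inner (s ?k) d + cc\<^sup>2 * (norm d)\<^sup>2"
    unfolding sS power2_norm_eq_inner by (simp add: power2_norm_eq_inner inner_diff_left inner_diff_right inner_commute power2_eq_square algebra_simps)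
  have dd: "0 \<le> cc\<^sup>2 * (norm d)\<^sup>2" by simp
  have A0: "0 \<le> norm w0 + gam \<alpha> j * (Kp * Mc)" using gam_nonneg Kp_nonneg Mc_nonneg by simp
  have gS: "gam \<alpha> ?k = gam \<alpha> j + cc" unfolding gam_def cc_def by simp
  have sn: "norm (s ?k) \<le> (norm w0 + gam \<alpha> j * (Kp * Mc)) + cc * (Kp * Mc)"
    using s_norm[of ?k] gS by (simp add: algebra_simps)
  have Kn: "0 \<le> Kp * n" using Kp_nonneg n0 by simp
  have "2 * cc * (norm (s ?k) * (Kp * n)) \<le> 2 * cc * (((norm w0 + gam \<alpha> j * (Kp * Mc)) + cc * (Kp * Mc)) * (Kp * n))"
    using sn Kn cc0 by (intro mult_left_mono mult_right_mono) auto
  also have "\<dots> = 2 * Kp * (norm w0 + gam \<alpha> j * (Kp * Mc)) * (cc * n) + 2 * Kp * (Kp * Mc) * (cc * (cc * n))"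
    by (simp add: algebra_simps)
  also have "\<dots> \<le> 2 * Kp * (norm w0 + gam \<alpha> j * (Kp * Mc)) * (cc * \<epsilon> ?k) + 2 * Kp * (Kp * Mc) * (cc * \<epsilon> ?k)"
  proof -
    have h1: "cc * n \<le> cc * \<epsilon> ?k" using neps cc0 by (simp add: mult_left_mono)
    have "cc * n \<le> \<epsilon> ?k" using naeps a0 by (simp add: cc_def divide_le_eq mult.commute)
    then have h2: "cc * (cc * n) \<le> cc * \<epsilon> ?k" using cc0 by (simp add: mult_left_mono)
    have k1: "0 \<le> 2 * Kp * (norm w0 + gam \<alpha> j * (Kp * Mc))" using A0 Kp_nonneg by simp
    have k2: "0 \<le> 2 * Kp * (Kp * Mc)" using Kp_nonneg Mc_nonneg by simp
    show ?thesis using mult_left_mono[OF h1 k1] mult_left_mono[OF h2 k2] by linarith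
  qed
  also have "\<dots> = C2 * (\<epsilon> ?k / \<alpha> ?k) + C3 * (gam \<alpha> j * \<epsilon> ?k / \<alpha> ?k)"
    unfolding C2_def C3_def cc_def by (simp add: algebra_simps)
  finally have T: "2 * cc * (norm (s ?k) * (Kp * n)) \<le> C2 * (\<epsilon> ?k / \<alpha> ?k) + C3 * (gam \<alpha> j * \<epsilon> ?k / \<alpha> ?k)" .
  have "2 * cc * inner (s ?k) d \<le> 2 * cc * (- E ?k + norm (s ?k) * (Kp * n))"
    using c cc0 by (intro mult_left_mono) auto
  also have "\<dots> = - 2 * (E ?k / \<alpha> ?k) + 2 * cc * (norm (s ?k) * (Kp * n))"
    by (simp add: cc_def algebra_simps)
  finally have cc2: "2 * cc * inner (s ?k) d \<le> - 2 * (E ?k / \<alpha> ?k) + 2 * cc * (norm (s ?k) * (Kp * n))" .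
  show ?thesis using nsq dd T cc2 by linarith
qed

end



context bm
begin

lemma R_parts: "0 \<le> \<epsilon> (Suc i) / \<alpha> (Suc i) \<and> 0 \<le> gam \<alpha> i * \<epsilon> (Suc i) / \<alpha> (Suc i)
  \<and> \<epsilon> (Suc i) / \<alpha> (Suc i) \<le> Rterm \<alpha> \<epsilon> (Suc i)
  \<and> gam \<alpha> i * \<epsilon> (Suc i) / \<alpha> (Suc i) \<le> Rterm \<alpha> \<epsilon> (Suc i)"
proof -
  have a0: "0 < \<alpha> (Suc i)" and e0: "0 < \<epsilon> (Suc i)" using \<alpha>_pos \<epsilon>_pos by auto
  have g0: "0 \<le> gam \<alpha> i" by (rule gam_nonneg)
  have t1: "0 \<le> \<epsilon> (Suc i) / \<alpha> (Suc i)" using a0 e0 by simp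
  have t2: "0 \<le> (\<epsilon> (Suc i))\<^sup>2 / (\<alpha> (Suc i))\<^sup>2" by simp
  have t3: "0 \<le> gam \<alpha> i * \<epsilon> (Suc i) / \<alpha> (Suc i)" using a0 e0 g0 by simp
  have t4: "0 \<le> (\<epsilon> (Suc i))\<^sup>2 / \<alpha> (Suc i)" using a0 by simp
  show ?thesis using t1 t2 t3 t4 unfolding Rterm_def by simp
qed

lemma sum_sig: "summable (\<lambda>i. \<epsilon> (Suc i) / \<alpha> (Suc i))"
  by (rule summable_comparison_test'[OF R_sum, of 0]) (metis R_parts abs_of_nonneg real_norm_def)

lemma sum_tau: "summable (\<lambda>i. gam \<alpha> i * \<epsilon> (Suc i) / \<alpha> (Suc i))"
  by (rule summable_comparison_test'[OF R_sum, of 0]) (metis R_parts abs_of_nonneg real_norm_def)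

definition Ss where "Ss = (\<Sum>i. \<epsilon> (Suc i) / \<alpha> (Suc i))"
definition St where "St = (\<Sum>i. gam \<alpha> i * \<epsilon> (Suc i) / \<alpha> (Suc i))"

lemma Ss_le: "(\<Sum>i<k. \<epsilon> (Suc i) / \<alpha> (Suc i)) \<le> Ss"
  unfolding Ss_def by (rule sum_le_suminf[OF sum_sig]) (use R_parts in auto)
lemma St_le: "(\<Sum>i<k. gam \<alpha> i * \<epsilon> (Suc i) / \<alpha> (Suc i)) \<le> St"
  unfolding St_def by (rule sum_le_suminf[OF sum_tau]) (use R_parts in auto)

lemma C_nonneg: "0 \<le> C1" "0 \<le> C2" "0 \<le> C3"
  using Kp_nonneg Mc_nonneg unfolding C1_def C2_def C3_def by auto

lemma sumA: "(\<Sum>i<k. 2 * (E (Suc i) / \<alpha> (Suc i))) \<le> (norm (s 0))\<^sup>2 - (norm (s k))\<^sup>2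
   + (\<Sum>i<k. C2 * (\<epsilon> (Suc i) / \<alpha> (Suc i)) + C3 * (gam \<alpha> i * \<epsilon> (Suc i) / \<alpha> (Suc i)))"
proof (induction k)
  case 0 then show ?case by simp
next
  case (Suc k)
  then show ?case using rec2[of k] by simp
qed

definition B1 where "B1 = ((norm w0)\<^sup>2 + C2 * Ss + C3 * St) / 2"

lemma sumA': "(\<Sum>i<k. E (Suc i) / \<alpha> (Suc i)) \<le> B1"
proof -
  have s0: "s 0 = - w0" by (simp add: s_def)
  have "(\<Sum>i<k. C2 * (\<epsilon> (Suc i) / \<alpha> (Suc i)) + C3 * (gam \<alpha> i * \<epsilon> (Suc i) / \<alpha> (Suc i)))
      = C2 * (\<Sum>i<k. \<epsilon> (Suc i) / \<alpha> (Suc i)) + C3 * (\<Sum>i<k. gam \<alpha> i * \<epsilon> (Suc i) / \<alpha> (Suc i))"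
    by (simp add: sum.distrib sum_distrib_left)
  also have "\<dots> \<le> C2 * Ss + C3 * St"
    using C_nonneg Ss_le St_le by (intro add_mono mult_left_mono) auto
  finally have h: "(\<Sum>i<k. C2 * (\<epsilon> (Suc i) / \<alpha> (Suc i)) + C3 * (gam \<alpha> i * \<epsilon> (Suc i) / \<alpha> (Suc i)))
      \<le> C2 * Ss + C3 * St" .
  have "(\<Sum>i<k. 2 * (E (Suc i) / \<alpha> (Suc i))) = 2 * (\<Sum>i<k. E (Suc i) / \<alpha> (Suc i))"
    by (simp add: sum_distrib_left)
  then show ?thesis using sumA[of k] h s0 unfolding B1_def
    by (simp add: field_simps) (smt (verit) zero_le_power2)
qed

lemma sumB: "gam \<alpha> k * E k \<le> (\<Sum>i<k. E (Suc i) / \<alpha> (Suc i)) + C1 * (\<Sum>i<k. gam \<alpha> i * \<epsilon> (Suc i) / \<alpha> (Suc i))"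
proof (induction k)
  case 0 then show ?case by (simp add: gam_def)
next
  case (Suc k)
  have gS: "gam \<alpha> (Suc k) = gam \<alpha> k + 1 / \<alpha> (Suc k)" by (simp add: gam_def)
  have "gam \<alpha> k * E (Suc k) \<le> gam \<alpha> k * (E k + C1 * (\<epsilon> (Suc k) / \<alpha> (Suc k)))"
    using rec1[of k] gam_nonneg by (intro mult_left_mono) auto
  also have "\<dots> = gam \<alpha> k * E k + C1 * (gam \<alpha> k * \<epsilon> (Suc k) / \<alpha> (Suc k))" by (simp add: algebra_simps)
  finally have h: "gam \<alpha> k * E (Suc k) \<le> gam \<alpha> k * E k + C1 * (gam \<alpha> k * \<epsilon> (Suc k) / \<alpha> (Suc k))" .
  have "gam \<alpha> (Suc k) * E (Suc k) = gam \<alpha> k * E (Suc k) + E (Suc k) / \<alpha> (Suc k)"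
    unfolding gS by (simp add: algebra_simps)
  then show ?case using Suc.IH h by (simp add: algebra_simps)
qed

definition Bf where "Bf = B1 + C1 * St"

lemma gamE: "gam \<alpha> k * E k \<le> Bf"
proof -
  have "C1 * (\<Sum>i<k. gam \<alpha> i * \<epsilon> (Suc i) / \<alpha> (Suc i)) \<le> C1 * St"
    using C_nonneg St_le by (intro mult_left_mono) auto
  then show ?thesis using sumB[of k] sumA'[of k] unfolding Bf_def by linarith
qed

lemma E_lim: "E \<longlonglongrightarrow> 0"
proof -
  obtain Ca where Ca: "\<forall>k \<ge> 1. \<alpha> k \<le> Ca" using \<alpha>_bdd by blast
  have Ca0: "0 < Ca" using Ca \<alpha>_pos[of 1] by fastforce
  have gl: "real k / Ca \<le> gam \<alpha> k" for k
  proof -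
    have "(\<Sum>i=1..k. 1 / Ca) \<le> (\<Sum>i=1..k. 1 / \<alpha> i)"
    proof (rule sum_mono)
      fix i assume "i \<in> {1..k}"
      then have "0 < \<alpha> i" "\<alpha> i \<le> Ca" using \<alpha>_pos Ca by auto
      then show "1 / Ca \<le> 1 / \<alpha> i" by (intro divide_left_mono) auto
    qed
    then show ?thesis by (simp add: gam_def)
  qed
  have bound: "E k \<le> Bf * Ca / real k" if k: "k \<ge> 1" for k
  proof -
    have "E k * (real k / Ca) \<le> E k * gam \<alpha> k" using gl E_nonneg by (intro mult_left_mono) auto
    also have "\<dots> \<le> Bf" using gamE[of k] by (simp add: mult.commute)
    finally have "E k * real k \<le> Bf * Ca" using Ca0 by (simp add: field_simps)
    then show ?thesis using k by (simp add: field_simps)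
  qed
  show ?thesis
  proof (rule tendsto_sandwich[where f="\<lambda>_. 0" and h="\<lambda>k. Bf * Ca / real k"])
    show "\<forall>\<^sub>F k in sequentially. 0 \<le> E k" using E_nonneg by simp
    show "\<forall>\<^sub>F k in sequentially. E k \<le> Bf * Ca / real k"
      using bound by (auto simp: eventually_sequentially)
    show "(\<lambda>k. Bf * Ca / real k) \<longlonglongrightarrow> 0" by (rule lim_const_over_n)
  qed simp
qed

lemma eps_lim: "\<epsilon> \<longlonglongrightarrow> 0"
proof -
  obtain Ca where Ca: "\<forall>k \<ge> 1. \<alpha> k \<le> Ca" using \<alpha>_bdd by blast
  have "(\<lambda>i. \<epsilon> (Suc i) / \<alpha> (Suc i)) \<longlonglongrightarrow> 0" by (rule summable_LIMSEQ_zero[OF sum_sig])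
  then have sl: "(\<lambda>i. \<epsilon> i / \<alpha> i) \<longlonglongrightarrow> 0" by (rule LIMSEQ_imp_Suc)
  show ?thesis
  proof (rule tendsto_sandwich[where f="\<lambda>_. 0" and h="\<lambda>k. Ca * (\<epsilon> k / \<alpha> k)"])
    show "\<forall>\<^sub>F k in sequentially. 0 \<le> \<epsilon> k"
      using \<epsilon>_pos by (auto simp: eventually_sequentially intro!: exI[of _ 1] less_imp_le)
    show "\<forall>\<^sub>F k in sequentially. \<epsilon> k \<le> Ca * (\<epsilon> k / \<alpha> k)"
    proof (unfold eventually_sequentially, intro exI[of _ 1] allI impI)
      fix k :: nat assume k: "1 \<le> k"
      have a0: "0 < \<alpha> k" and e0: "0 < \<epsilon> k" using \<alpha>_pos \<epsilon>_pos k by auto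
      have "\<epsilon> k = \<alpha> k * (\<epsilon> k / \<alpha> k)" using a0 by simp
      also have "\<dots> \<le> Ca * (\<epsilon> k / \<alpha> k)" using Ca k a0 e0 by (intro mult_right_mono) auto
      finally show "\<epsilon> k \<le> Ca * (\<epsilon> k / \<alpha> k)" .
    qed
    show "(\<lambda>k. Ca * (\<epsilon> k / \<alpha> k)) \<longlonglongrightarrow> 0" using tendsto_mult_right_zero[OF sl] by simp
  qed simp
qed

lemma final_bound: assumes k: "1 \<le> k"
  shows "l2norm \<Omega> (\<lambda>x. uin k x - udag x) \<le> sqrt (2 * (\<epsilon> k)\<^sup>2 + 4 * E k)"
proof -
  have ukL: "uin k \<in> L2 \<Omega>" using uin_L2 k .
  define n where "n = l2norm \<Omega> (\<lambda>x. uin k x - v k x)"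
  have n0: "0 \<le> n" unfolding n_def by (rule l2norm_nonneg)
  have "n \<le> \<epsilon> k" using eb[OF k] by (simp add: n_def)
  then have nsq: "n\<^sup>2 \<le> (\<epsilon> k)\<^sup>2" using n0 by (intro power_mono) auto
  have nsq2: "n\<^sup>2 = l2inner \<Omega> (\<lambda>x. uin k x - v k x) (\<lambda>x. uin k x - v k x)"
    unfolding n_def by (rule l2norm_sq)
  have vL: "v k \<in> L2 \<Omega>" by (rule v_L2)
  have pw: "(uin k x - udag x) * (uin k x - udag x)
      \<le> 2 * ((uin k x - v k x) * (uin k x - v k x)) + 2 * ((udag x - v k x) * (udag x - v k x))" for x
  proof -
    have "0 \<le> ((uin k x - v k x) + (udag x - v k x)) * ((uin k x - v k x) + (udag x - v k x))" by simp
    moreover have "2 * ((uin k x - v k x) * (uin k x - v k x)) + 2 * ((udag x - v k x) * (udag x - v k x))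
       - (uin k x - udag x) * (uin k x - udag x)
       = ((uin k x - v k x) + (udag x - v k x)) * ((uin k x - v k x) + (udag x - v k x))"
      by (simp add: algebra_simps)
    ultimately show ?thesis by linarith
  qed
  have i1: "integrable M (\<lambda>x. (uin k x - v k x) * (uin k x - v k x))"
    using ukL vL by (intro L2_mult_integrable L2_diff)
  have i2: "integrable M (\<lambda>x. (udag x - v k x) * (udag x - v k x))"
    using udag_L2 vL by (intro L2_mult_integrable L2_diff)
  have i0: "integrable M (\<lambda>x. (uin k x - udag x) * (uin k x - udag x))"
    using ukL udag_L2 by (intro L2_mult_integrable L2_diff)
  have "l2inner \<Omega> (\<lambda>x. uin k x - udag x) (\<lambda>x. uin k x - udag x)
      \<le> (\<integral>x. 2 * ((uin k x - v k x) * (uin k x - v k x)) + 2 * ((udag x - v k x) * (udag x - v k x)) \<partial>M)"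
    unfolding l2inner_def using i0 i1 i2 pw by (intro integral_mono) auto
  also have "\<dots> = 2 * l2inner \<Omega> (\<lambda>x. uin k x - v k x) (\<lambda>x. uin k x - v k x)
        + 2 * l2inner \<Omega> (\<lambda>x. udag x - v k x) (\<lambda>x. udag x - v k x)"
    unfolding l2inner_def using i1 i2 by simp
  finally have "l2inner \<Omega> (\<lambda>x. uin k x - udag x) (\<lambda>x. uin k x - udag x)
      \<le> 2 * l2inner \<Omega> (\<lambda>x. uin k x - v k x) (\<lambda>x. uin k x - v k x)
        + 2 * l2inner \<Omega> (\<lambda>x. udag x - v k x) (\<lambda>x. udag x - v k x)" .
  then have "(l2norm \<Omega> (\<lambda>x. uin k x - udag x))\<^sup>2 \<le> 2 * (\<epsilon> k)\<^sup>2 + 4 * E k"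
    using E_lower[of k] nsq nsq2 l2norm_sq[of \<Omega> "\<lambda>x. uin k x - udag x"] by linarith
  then show ?thesis by (rule real_le_rsqrt)
qed

lemma main: "(\<lambda>k. l2norm \<Omega> (\<lambda>x. uin k x - udag x)) \<longlonglongrightarrow> 0"
proof (rule tendsto_sandwich[where f="\<lambda>_. 0" and h="\<lambda>k. sqrt (2 * (\<epsilon> k)\<^sup>2 + 4 * E k)"])
  show "\<forall>\<^sub>F k in sequentially. 0 \<le> l2norm \<Omega> (\<lambda>x. uin k x - udag x)"
    by (simp add: l2norm_nonneg)
  show "\<forall>\<^sub>F k in sequentially. l2norm \<Omega> (\<lambda>x. uin k x - udag x) \<le> sqrt (2 * (\<epsilon> k)\<^sup>2 + 4 * E k)"
    using final_bound by (auto simp: eventually_sequentially)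
  have "(\<lambda>k. sqrt (2 * (\<epsilon> k)\<^sup>2 + 4 * E k)) \<longlonglongrightarrow> sqrt (2 * 0\<^sup>2 + 4 * 0)"
    by (intro tendsto_intros eps_lim E_lim)
  then show "(\<lambda>k. sqrt (2 * (\<epsilon> k)\<^sup>2 + 4 * E k)) \<longlonglongrightarrow> 0" by simp
qed simp

end

theorem corollary4p2:
  fixes \<Omega> :: "'a::euclidean_space set"
    and S :: "('a \<Rightarrow> real) \<Rightarrow> 'b::{real_inner, complete_space}"
    and Sadj :: "'b \<Rightarrow> 'a \<Rightarrow> real"
    and z :: 'b
    and ua ub udag :: "'a \<Rightarrow> real"
    and \<alpha> \<epsilon> :: "nat \<Rightarrow> real"
    and uin lam :: "nat \<Rightarrow> 'a \<Rightarrow> real"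
  assumes \<Omega>_meas: "\<Omega> \<in> sets lebesgue" and \<Omega>_bdd: "bounded \<Omega>"
    and S_add: "\<And>u v. u \<in> L2 \<Omega> \<Longrightarrow> v \<in> L2 \<Omega> \<Longrightarrow> S (\<lambda>x. u x + v x) = S u + S v"
    and S_scale: "\<And>c u. u \<in> L2 \<Omega> \<Longrightarrow> S (\<lambda>x. c * u x) = c *\<^sub>R S u"
    and S_bdd: "\<exists>K. \<forall>u \<in> L2 \<Omega>. norm (S u) \<le> K * l2norm \<Omega> u"
    and Sadj_L2: "\<And>w. Sadj w \<in> L2 \<Omega>"
    and Sadj_adj: "\<And>w u. u \<in> L2 \<Omega> \<Longrightarrow> l2inner \<Omega> (Sadj w) u = inner w (S u)"
    and ua: "ua \<in> Linf \<Omega>" and ub: "ub \<in> Linf \<Omega>"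
    and uab: "AE x in lebesgue_on \<Omega>. ua x \<le> ub x"
    and udag_adm: "udag \<in> Uad \<Omega> ua ub"
    and udag_opt: "\<And>u. u \<in> Uad \<Omega> ua ub \<Longrightarrow>
        (1/2) * (norm (S udag - z))\<^sup>2 \<le> (1/2) * (norm (S u - z))\<^sup>2"
    and source: "\<exists>w. AE x in lebesgue_on \<Omega>. udag x = PUad \<Omega> ua ub (Sadj w) x"
    and \<alpha>_pos: "\<And>k. k \<ge> 1 \<Longrightarrow> \<alpha> k > 0"
    and \<alpha>_bdd: "\<exists>C. \<forall>k \<ge> 1. \<alpha> k \<le> C"
    and \<epsilon>_pos: "\<And>k. k \<ge> 1 \<Longrightarrow> \<epsilon> k > 0"
    and R_sum: "summable (\<lambda>i. Rterm \<alpha> \<epsilon> (Suc i))"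
    and init_u: "uin 0 = PUad \<Omega> ua ub (\<lambda>x. 0)"
    and init_lam: "lam 0 = (\<lambda>x. 0)"
    and step_adm: "\<And>k. k \<ge> 1 \<Longrightarrow> uin k \<in> Uad \<Omega> ua ub"
    and step_inexact: "\<And>k. k \<ge> 1 \<Longrightarrow> Bres \<Omega> ua ub S Sadj z (\<alpha> k) (lam (k - 1)) (uin k) \<le> \<epsilon> k"
    and step_lam: "\<And>k. k \<ge> 1 \<Longrightarrow>
        lam k = (\<lambda>x. \<Sum>i=1..k. (1 / \<alpha> i) * Sadj (z - S (uin i)) x)"
  shows "(\<lambda>k. l2norm \<Omega> (\<lambda>x. uin k x - udag x)) \<longlonglongrightarrow> 0"
proof -
  interpret bm \<Omega> S Sadj z ua ub udag \<alpha> \<epsilon> uin lam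
    by (rule bm.intro) (fact assms)+
  show ?thesis by (rule main)
qed

end
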